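(* For every prime power $q$ and every $G\in\mathfrak{g}_3(\mathbb{F}_q)$, the nonlooped vertices of $G$ are pairwise adjacent (they form a clique).
   Context: For a symmetric $n\times n$ matrix $A$, the looped graph corresponding to $A$, $\Gamma(A)$, has vertex set $\{1,\dots,n\}$, an edge $ij$ ($i\neq j$) iff $a_{ij}\neq0$, and a loop at $i$ iff $a_{ii}\ne 0$. Definition of $\mathfrak{g}_k(\mathbb{F}_q)$: let $x_1,\dots,x_m$ be representatives of the classes of nonzero vectors of $\mathbb{F}_q^k$ under the relation $x\sim cx$ ($c\in\mathbb{F}_q$, $c\neq0$), and let $U=[x_1\ \cdots\ x_m]$; $\mathfrak{g}_k(\mathbb{F}_q)$ is the set of isomorphism classes of looped graphs $\Gamma(U^tBU)$ as $B$ ranges over the invertible symmetric $k\times k$ matrices over $\mathbb{F}_q$. *)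

theory Defs
  imports "HOL-Analysis.Analysis"
begin

definition bform :: "'a::field ^'n^'n \<Rightarrow> 'a^'n \<Rightarrow> 'a^'n \<Rightarrow> 'a" where
  "bform B x y = (\<Sum>k\<in>UNIV. x $ k * (B *v y) $ k)"

text \<open>U : {0..<m} -> F^k is a system of representatives of the classes of nonzero
  vectors under x ~ c x (c nonzero), i.e. the columns x_1..x_m of the matrix U.\<close>
definition proj_reps :: "nat \<Rightarrow> (nat \<Rightarrow> 'a::field ^'n) \<Rightarrow> bool" where
  "proj_reps m U \<longleftrightarrow>
     (\<forall>i<m. U i \<noteq> 0) \<and>
     (\<forall>i<m. \<forall>j<m. \<forall>c. c \<noteq> 0 \<and> U i = c *s U j \<longrightarrow> i = j) \<and>
     (\<forall>x. x \<noteq> 0 \<longrightarrow> (\<exists>i<m. \<exists>c. c \<noteq> 0 \<and> x = c *s U i))"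

definition gram :: "'a::field ^'n^'n \<Rightarrow> (nat \<Rightarrow> 'a^'n) \<Rightarrow> nat \<Rightarrow> nat \<Rightarrow> 'a" where
  "gram B U i j = bform B (U i) (U j)"

definition has_loop :: "(nat \<Rightarrow> nat \<Rightarrow> 'a::zero) \<Rightarrow> nat \<Rightarrow> bool" where
  "has_loop A i \<longleftrightarrow> A i i \<noteq> 0"

definition adjacent :: "(nat \<Rightarrow> nat \<Rightarrow> 'a::zero) \<Rightarrow> nat \<Rightarrow> nat \<Rightarrow> bool" where
  "adjacent A i j \<longleftrightarrow> i \<noteq> j \<and> A i j \<noteq> 0"

end

theory Submission
  imports Defs
begin

definition cr :: "'a::field^3 \<Rightarrow> 'a^3 \<Rightarrow> 'a^3" where
 "cr u v = vector [u$2* v$3 - u$3* v$2, u$3* v$1 - u$1* v$3, u$1* v$2 - u$2* v$1]"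

lemma cr_comp: "cr u v $ 1 = u$2* v$3 - u$3* v$2" "cr u v $ 2 = u$3* v$1 - u$1* v$3" "cr u v $ 3 = u$1* v$2 - u$2* v$1"
  by (simp_all add: cr_def)

lemma vec3_eq: "(x::'a^3) = y \<longleftrightarrow> x$1 = y$1 \<and> x$2 = y$2 \<and> x$3 = y$3"
  by (simp add: vec_eq_iff forall_3)

lemma par:
  fixes x c :: "'a::field^3"
  assumes "c \<noteq> 0" "x$2* c$3 = x$3* c$2" "x$3* c$1 = x$1* c$3" "x$1* c$2 = x$2* c$1"
  shows "\<exists>\<alpha>. x = \<alpha> *s c"
proof -
  have "c$1 \<noteq> 0 \<or> c$2 \<noteq> 0 \<or> c$3 \<noteq> 0" using assms(1) by (auto simp: vec3_eq)
  then show ?thesis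
  proof (elim disjE)
    assume h: "c$1 \<noteq> 0"
    show ?thesis
      apply (rule exI[of _ "x$1 / c$1"]) using h assms by (auto simp: vec3_eq field_simps)
  next
    assume h: "c$2 \<noteq> 0"
    show ?thesis
      apply (rule exI[of _ "x$2 / c$2"]) using h assms by (auto simp: vec3_eq field_simps)
  next
    assume h: "c$3 \<noteq> 0"
    show ?thesis
      apply (rule exI[of _ "x$3 / c$3"]) using h assms by (auto simp: vec3_eq field_simps)
  qed
qed

lemma perp:
  fixes x u v :: "'a::field^3"
  assumes "x$1* u$1+x$2* u$2+x$3* u$3 = 0" "x$1* v$1+x$2* v$2+x$3* v$3 = 0" "cr u v \<noteq> 0"
  shows "\<exists>\<alpha>. x = \<alpha> *s cr u v"
proof (rule par[OF assms(3)], simp_all only: cr_comp)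
  show "x $ 2 * (u $ 1 * v $ 2 - u $ 2 * v $ 1) = x $ 3 * (u $ 3 * v $ 1 - u $ 1 * v $ 3)"
  proof -
    have "x $ 2 * (u $ 1 * v $ 2 - u $ 2 * v $ 1) - x $ 3 * (u $ 3 * v $ 1 - u $ 1 * v $ 3)
      = u$1 * (x$1* v$1+x$2* v$2+x$3* v$3) - v$1*(x$1* u$1+x$2* u$2+x$3* u$3)" by (simp add: algebra_simps)
    then show ?thesis using assms by simp
  qed
  show "x $ 3 * (u $ 2 * v $ 3 - u $ 3 * v $ 2) = x $ 1 * (u $ 1 * v $ 2 - u $ 2 * v $ 1)"
  proof -
    have "x $ 3 * (u $ 2 * v $ 3 - u $ 3 * v $ 2) - x $ 1 * (u $ 1 * v $ 2 - u $ 2 * v $ 1)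
      = u$2 * (x$1* v$1+x$2* v$2+x$3* v$3) - v$2*(x$1* u$1+x$2* u$2+x$3* u$3)" by (simp add: algebra_simps)
    then show ?thesis using assms by simp
  qed
  show "x $ 1 * (u $ 3 * v $ 1 - u $ 1 * v $ 3) = x $ 2 * (u $ 2 * v $ 3 - u $ 3 * v $ 2)"
  proof -
    have "x $ 1 * (u $ 3 * v $ 1 - u $ 1 * v $ 3) - x $ 2 * (u $ 2 * v $ 3 - u $ 3 * v $ 2)
      = u$3 * (x$1* v$1+x$2* v$2+x$3* v$3) - v$3*(x$1* u$1+x$2* u$2+x$3* u$3)" by (simp add: algebra_simps)
    then show ?thesis using assms by simp
  qed
qed

lemma cr_zero:
  fixes u v :: "'a::field^3"
  assumes "u \<noteq> 0" "v \<noteq> 0" "cr u v = 0"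
  shows "\<exists>k. k \<noteq> 0 \<and> u = k *s v"
proof -
  have e: "u$2* v$3 = u$3* v$2" "u$3* v$1 = u$1* v$3" "u$1* v$2 = u$2* v$1"
    using assms(3) by (simp_all add: vec3_eq cr_comp)
  from par[OF assms(2) e(1) _ e(3)] e(2) obtain k where k: "u = k *s v" by (metis mult.commute)
  then show ?thesis using assms(1) by (intro exI[of _ k]) auto
qed


lemma bform3: "bform B x y = (\<Sum>k\<in>UNIV. x $ k * (B *v y) $ k)"
  by (simp add: bform_def)

lemma bform_exp: "bform (B::'a::field^3^3) x y =
   x$1 * (B$1$1 * y$1 + B$1$2 * y$2 + B$1$3 * y$3) +
   x$2 * (B$2$1 * y$1 + B$2$2 * y$2 + B$2$3 * y$3) +
   x$3 * (B$3$1 * y$1 + B$3$2 * y$2 + B$3$3 * y$3)"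
  unfolding bform_def sum_3 matrix_vector_mult_def by simp

lemma bform_sym:
  fixes B :: "'a::field^3^3"
  assumes "transpose B = B"
  shows "bform B x y = bform B y x"
proof -
  have s: "B$k$l = B$l$k" for k l using arg_cong[OF assms, of "\<lambda>M. M$l$k"] by (simp add: transpose_def)
  show ?thesis unfolding bform_exp using s[of 1 2] s[of 1 3] s[of 2 3]
    by (simp add: distrib_left mult_ac add_ac)
qed

lemma bform_dot: "bform (B::'a::field^3^3) x y = (B *v y)$1 * x$1 + (B *v y)$2 * x$2 + (B *v y)$3 * x$3"
  unfolding bform_def sum_3 by (simp only: mult.commute)

lemma inv_inj:
  assumes "invertible (B::'a::field^3^3)" "B *v x = 0" shows "x = 0"
proof -
  obtain A where "A ** B = mat 1" using assms(1) unfolding invertible_def by blast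
  then have "x = A *v (B *v x)" by (simp add: matrix_vector_mul_assoc)
  then show ?thesis using assms(2) by simp
qed

theorem mainTheorem16:
  fixes B :: "'a::{finite,field} ^3^3" and U :: "nat \<Rightarrow> 'a^3" and m :: nat
  assumes "proj_reps m U"
    and "transpose B = B"
    and "invertible B"
  shows "\<forall>i<m. \<forall>j<m. i \<noteq> j \<and> \<not> has_loop (gram B U) i \<and> \<not> has_loop (gram B U) j
           \<longrightarrow> adjacent (gram B U) i j"
proof (intro allI impI, elim conjE)
  fix i j assume i: "i < m" and j: "j < m" and ij: "i \<noteq> j"
    and li: "\<not> has_loop (gram B U) i" and lj: "\<not> has_loop (gram B U) j"
  define u where "u = U i"
  define v where "v = U j"
  have u0: "u \<noteq> 0" and v0: "v \<noteq> 0" using assms(1) i j by (auto simp: proj_reps_def u_def v_def)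
  have nd: "\<And>c. c \<noteq> 0 \<Longrightarrow> u \<noteq> c *s v"
    using assms(1) i j ij by (auto simp: proj_reps_def u_def v_def)
  have buu: "bform B u u = 0" and bvv: "bform B v v = 0"
    using li lj by (auto simp: has_loop_def gram_def u_def v_def)
  show "adjacent (gram B U) i j"
  proof (rule ccontr)
    assume "\<not> ?thesis"
    then have buv: "bform B u v = 0" using ij by (simp add: adjacent_def gram_def u_def v_def)
    have bvu: "bform B v u = 0" using buv bform_sym[OF assms(2)] by metis
    have c0: "cr u v \<noteq> 0"
    proof
      assume "cr u v = 0"
      then obtain k where "k \<noteq> 0" "u = k *s v" using cr_zero u0 v0 by blast
      then show False using nd by blast
    qed
    have "\<exists>t. B *v u = t *s cr u v"
      using perp[OF _ _ c0, of "B *v u"] buu bvu by (simp add: bform_dot)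
    then obtain a where a: "B *v u = a *s cr u v" by blast
    have "\<exists>t. B *v v = t *s cr u v"
      using perp[OF _ _ c0, of "B *v v"] buv bvv by (simp add: bform_dot)
    then obtain b where b: "B *v v = b *s cr u v" by blast
    have "B *v (b *s u - a *s v) = 0"
      using a b by (simp add: matrix_vector_mult_diff_distrib vector_scalar_commute vector_smult_assoc mult.commute)
    then have e: "b *s u = a *s v" using inv_inj[OF assms(3)] by fastforce
    show False
    proof (cases "b = 0")
      case True
      then have "a *s v = 0" using e by simp
      then have "a = 0" using v0 by (simp add: vector_mul_eq_0)
      then have "B *v u = 0" using a by simp
      then show False using inv_inj[OF assms(3)] u0 by blast
    next
      case False
      then have "u = (a / b) *s v" using e
        by (metis (no_types, lifting) divide_inverse mult.commute vector_smult_assoc vector_smult_lid right_inverse)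
      moreover have "a / b \<noteq> 0" using calculation u0 False by auto
      ultimately show False using nd by blast
    qed
  qed
qed

end
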